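(* Let $\mathcal{X} \subset \mathbb{R}^d$ be compact and convex, let $\|\cdot\|$ be a norm on $\mathbb{R}^d$, let $\mu>0$, let $\beta: \mathcal{X} \to \mathbb{R}_{> 0}$ be continuous, and let $f: \mathcal{X} \to \mathbb{R}$ be upper semi-continuous. Let $\mathcal{S}_{\mu, \beta}(f)$ be the set of probability densities (measures) $\pi$ supported in $\mathcal{X}$ such that $\pi$ is $\mu$-strongly logconcave with respect to $\|\cdot\|$, the renormalized measure $\pi' \propto \beta \pi$ is also $\mu$-strongly logconcave with respect to $\|\cdot\|$, and $\int_{\mathcal{X}} f\, d\pi \geq 0$. Then every extreme point $\pi$ of $\mathrm{conv}(\mathcal{S}_{\mu, \beta}(f))$ satisfies one of the following: (i) $\pi$ is a Dirac measure at some $x \in \mathcal{X}$ with $f(x) \ge 0$; or (ii) $\pi$ is supported on a line segment $[a, b] \subset \mathcal{X}$.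
   Context: A function $h$ is $\mu$-strongly convex in $\|\cdot\|$ if $h(tx+(1-t)y)\le th(x)+(1-t)h(y)-\frac{\mu t(1-t)}{2}\|x-y\|^2$ for all $x,y$ in its domain and $t\in[0,1]$. A measure $\pi$ on $\mathbb{R}^d$ is $\mu$-strongly logconcave with respect to $\|\cdot\|$ if, letting $E$ be the least affine subspace containing the support of $\pi$ and $m_E$ the Lebesgue measure on $E$, we have $d\pi=g\,dm_E$ where $g$ is nonnegative and locally integrable and $-\log g: E\to\mathbb{R}\cup\{+\infty\}$ is $\mu$-strongly convex in $\|\cdot\|$. For $a,b\in\mathbb{R}^d$, $[a,b]$ denotes the line segment between them. *)

theory Defs
  imports "HOL-Analysis.Analysis" "HOL-Probability.Probability"
begin

definition is_norm :: "('a::real_vector \<Rightarrow> real) \<Rightarrow> bool" where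
  "is_norm N \<longleftrightarrow> (\<forall>x. N x \<ge> 0) \<and> (\<forall>x. N x = 0 \<longleftrightarrow> x = 0)
     \<and> (\<forall>c x. N (c *\<^sub>R x) = \<bar>c\<bar> * N x) \<and> (\<forall>x y. N (x + y) \<le> N x + N y)"

definition usc_on :: "'a::metric_space set \<Rightarrow> ('a \<Rightarrow> real) \<Rightarrow> bool" where
  "usc_on X f \<longleftrightarrow> (\<forall>x\<in>X. \<forall>e>0. \<exists>d>0. \<forall>y\<in>X. dist y x < d \<longrightarrow> f y < f x + e)"

text \<open>mu-strong convexity in the norm N of an extended-real-valued function on E
  (values in R \<union> {+\<infinity>}; ereal arithmetic with 0 * \<infinity> = 0).\<close>
definition strongly_convex_on ::
  "'a::real_vector set \<Rightarrow> real \<Rightarrow> ('a \<Rightarrow> real) \<Rightarrow> ('a \<Rightarrow> ereal) \<Rightarrow> bool" where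
  "strongly_convex_on E \<mu> N h \<longleftrightarrow>
     (\<forall>x\<in>E. \<forall>y\<in>E. \<forall>t\<in>{0..1}.
        h (t *\<^sub>R x + (1 - t) *\<^sub>R y)
          \<le> ereal t * h x + ereal (1 - t) * h y - ereal (\<mu> * t * (1 - t) / 2 * (N (x - y))\<^sup>2))"

definition neglog :: "('a \<Rightarrow> real) \<Rightarrow> 'a \<Rightarrow> ereal" where
  "neglog g x = (if g x > 0 then ereal (- ln (g x)) else \<infinity>)"

definition msupport :: "'a::metric_space measure \<Rightarrow> 'a set" where
  "msupport M = {x. \<forall>e>0. emeasure M (ball x e) > 0}"

text \<open>Lebesgue measure on a (nonempty) affine subspace E: pushforward of Lebesgue measure
  on R^k, k = dim, under an affine isometric parametrisation
  t \<mapsto> x0 + sum_{b in B} t_b b, with B an orthonormal basis of the direction space of E.\<close>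
definition lebesgue_on_affine :: "'a::euclidean_space set \<Rightarrow> 'a measure" where
  "lebesgue_on_affine E =
    (let x0 = (SOME x. x \<in> E);
         V = (\<lambda>y. y - x0) ` E;
         B = (SOME B. finite B \<and> pairwise orthogonal B \<and> (\<forall>b\<in>B. norm b = 1) \<and> span B = V)
     in distr (PiM B (\<lambda>_. lborel)) borel (\<lambda>t. x0 + (\<Sum>b\<in>B. t b *\<^sub>R b)))"

definition strongly_logconcave :: "real \<Rightarrow> ('a::euclidean_space \<Rightarrow> real) \<Rightarrow> 'a measure \<Rightarrow> bool" where
  "strongly_logconcave \<mu> N \<pi> \<longleftrightarrow>
    (let E = affine hull (msupport \<pi>); mE = lebesgue_on_affine E in
      \<exists>g :: 'a \<Rightarrow> real. g \<in> borel_measurable borel \<and> (\<forall>x. g x \<ge> 0)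
        \<and> (\<forall>K. compact K \<longrightarrow> (\<integral>\<^sup>+ x. ennreal (g x * indicator K x) \<partial>mE) < \<infinity>)
        \<and> \<pi> = density mE (\<lambda>x. ennreal (g x))
        \<and> strongly_convex_on E \<mu> N (neglog g))"

text \<open>Renormalised measure pi' proportional to beta * pi (beta only matters on X).\<close>
definition renorm :: "'a::euclidean_space set \<Rightarrow> ('a \<Rightarrow> real) \<Rightarrow> 'a measure \<Rightarrow> 'a measure" where
  "renorm X \<beta> \<pi> = (let Z = (\<integral>x. \<beta> x * indicator X x \<partial>\<pi>) in
       density \<pi> (\<lambda>x. ennreal (\<beta> x * indicator X x / Z)))"

text \<open>The set S_{mu,beta}(f). The integral of f (bounded above, possibly -\<infinity>) is >= 0,
  expressed as: integral of f^- \<le> integral of f^+.\<close>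
definition S_set :: "'a::euclidean_space set \<Rightarrow> ('a \<Rightarrow> real) \<Rightarrow> real \<Rightarrow> ('a \<Rightarrow> real)
     \<Rightarrow> ('a \<Rightarrow> real) \<Rightarrow> 'a measure set" where
  "S_set X N \<mu> \<beta> f = {\<pi>. prob_space \<pi> \<and> sets \<pi> = sets borel \<and> emeasure \<pi> (- X) = 0
      \<and> strongly_logconcave \<mu> N \<pi> \<and> strongly_logconcave \<mu> N (renorm X \<beta> \<pi>)
      \<and> (\<integral>\<^sup>+ x. ennreal (- (f x * indicator X x)) \<partial>\<pi>) \<le> (\<integral>\<^sup>+ x. ennreal (f x * indicator X x) \<partial>\<pi>)}"

definition conv_meas :: "'a::topological_space measure set \<Rightarrow> 'a measure set" where
  "conv_meas S = {\<nu>. sets \<nu> = sets borel \<and>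
     (\<exists>(n::nat) c p. (\<forall>i<n. p i \<in> S \<and> c i \<ge> (0::real)) \<and> (\<Sum>i<n. c i) = 1 \<and>
        (\<forall>A\<in>sets borel. emeasure \<nu> A = (\<Sum>i<n. ennreal (c i) * emeasure (p i) A)))}"

definition extreme_meas :: "'a::topological_space measure set \<Rightarrow> 'a measure \<Rightarrow> bool" where
  "extreme_meas C \<nu> \<longleftrightarrow> \<nu> \<in> C \<and>
     (\<forall>\<nu>1\<in>C. \<forall>\<nu>2\<in>C. \<forall>t::real. 0 < t \<and> t < 1 \<and>
        (\<forall>A\<in>sets borel. emeasure \<nu> A = ennreal t * emeasure \<nu>1 A + ennreal (1 - t) * emeasure \<nu>2 A)
        \<longrightarrow> \<nu>1 = \<nu>2)"

end

theory Submission
  imports Defs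
begin

lemma neglog_not_minf: "neglog g x \<noteq> -\<infinity>"
  by (simp add: neglog_def)

lemma sc_mult_affine:
  fixes g :: "'a::euclidean_space \<Rightarrow> real"
  assumes sc: "strongly_convex_on E \<mu> N (neglog g)" and a: "a > 0"
  shows "strongly_convex_on E \<mu> N (neglog (\<lambda>x. g x * max 0 (a * (\<alpha> + v \<bullet> x))))"
  unfolding strongly_convex_on_def
proof (intro ballI)
  fix x y t assume x: "x \<in> E" and y: "y \<in> E" and t: "t \<in> {0..1::real}"
  define ell where "ell z = \<alpha> + v \<bullet> z" for z
  define g1 where "g1 z = g z * max 0 (a * ell z)" for z
  define z where "z = t *\<^sub>R x + (1 - t) *\<^sub>R y"
  define c where "c = \<mu> * t * (1 - t) / 2 * (N (x - y))\<^sup>2"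
  have lz: "ell z = t * ell x + (1 - t) * ell y"
    unfolding ell_def z_def by (simp add: inner_add_right algebra_simps)
  have hyp: "neglog g z \<le> ereal t * neglog g x + ereal (1 - t) * neglog g y - ereal c"
    using sc x y t unfolding strongly_convex_on_def z_def c_def by blast
  have "neglog g1 z \<le> ereal t * neglog g1 x + ereal (1 - t) * neglog g1 y - ereal c"
  proof (cases "t = 0 \<or> t = 1")
    case True
    then show ?thesis unfolding z_def c_def
      by (auto simp: neglog_def)
  next
    case False
    with t have t01: "0 < t" "t < 1" by auto
    show ?thesis
    proof (cases "g1 x > 0 \<and> g1 y > 0")
      case False
      then have "neglog g1 x = \<infinity> \<or> neglog g1 y = \<infinity>" by (auto simp: neglog_def)
      moreover have "neglog g1 x \<noteq> -\<infinity>" "neglog g1 y \<noteq> -\<infinity>" by (simp_all add: neglog_not_minf)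
      ultimately have "ereal t * neglog g1 x + ereal (1 - t) * neglog g1 y - ereal c = \<infinity>"
        using t01 by (auto simp: ereal_mult_infty)
      then show ?thesis by simp
    next
      case True
      have gx: "g x > 0" and lx: "ell x > 0" using True a unfolding g1_def
        by (auto simp: zero_less_mult_iff max_def split: if_splits)
      have gy: "g y > 0" and ly: "ell y > 0" using True a unfolding g1_def
        by (auto simp: zero_less_mult_iff max_def split: if_splits)
      have "ereal t * neglog g x + ereal (1 - t) * neglog g y - ereal c
          = ereal (t * (- ln (g x)) + (1 - t) * (- ln (g y)) - c)"
        using gx gy by (simp add: neglog_def)
      with hyp have h2: "neglog g z \<le> ereal (t * (- ln (g x)) + (1 - t) * (- ln (g y)) - c)" by simp
      then have gz: "g z > 0" by (auto simp: neglog_def split: if_splits)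
      with h2 have h3: "- ln (g z) \<le> t * (- ln (g x)) + (1 - t) * (- ln (g y)) - c"
        by (simp add: neglog_def)
      have lz0: "ell z > 0" using lz lx ly t01
        by (smt (verit) mult_pos_pos)
      have conc: "t * ln (ell x) + (1 - t) * ln (ell y) \<le> ln (ell z)"
      proof -
        have "\<forall>x\<in>{0<..}. \<forall>y\<in>{0<..}. \<forall>u\<ge>0. \<forall>v\<ge>0. u + v = 1 \<longrightarrow>
               u * ln x + v * ln y \<le> ln (u *\<^sub>R x + v *\<^sub>R y)"
          using ln_concave unfolding concave_on_iff by blast
        then have "t * ln (ell x) + (1 - t) * ln (ell y) \<le> ln (t *\<^sub>R ell x + (1 - t) *\<^sub>R ell y)"
          using lx ly t01 by simp
        then show ?thesis using lz by simp
      qed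
      have e1: "g1 x = g x * (a * ell x)" "g1 y = g y * (a * ell y)" "g1 z = g z * (a * ell z)"
        using lx ly lz0 a unfolding g1_def by auto
      have ln1: "ln (g1 x) = ln (g x) + ln a + ln (ell x)"
        using e1 gx lx a by (simp add: ln_mult)
      have ln2: "ln (g1 y) = ln (g y) + ln a + ln (ell y)"
        using e1 gy ly a by (simp add: ln_mult)
      have ln3: "ln (g1 z) = ln (g z) + ln a + ln (ell z)"
        using e1 gz lz0 a by (simp add: ln_mult)
      have pos: "g1 x > 0" "g1 y > 0" "g1 z > 0" using e1 gx gy gz lx ly lz0 a by auto
      have "- ln (g1 z) \<le> t * (- ln (g1 x)) + (1 - t) * (- ln (g1 y)) - c"
        using h3 conc ln1 ln2 ln3 by (simp add: algebra_simps)
      then show ?thesis using pos by (simp add: neglog_def)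
    qed
  qed
  then show "neglog (\<lambda>x. g x * max 0 (a * (\<alpha> + v \<bullet> x))) (t *\<^sub>R x + (1 - t) *\<^sub>R y)
       \<le> ereal t * neglog (\<lambda>x. g x * max 0 (a * (\<alpha> + v \<bullet> x))) x +
          ereal (1 - t) * neglog (\<lambda>x. g x * max 0 (a * (\<alpha> + v \<bullet> x))) y -
          ereal (\<mu> * t * (1 - t) / 2 * (N (x - y))\<^sup>2)"
    unfolding g1_def ell_def z_def c_def .
qed

lemma msupport_subset:
  fixes \<nu> :: "'a::euclidean_space measure"
  assumes sets: "sets \<nu> = sets borel" and X: "closed X" and nX: "emeasure \<nu> (-X) = 0"
  shows "msupport \<nu> \<subseteq> X"
proof
  fix x assume x: "x \<in> msupport \<nu>"
  show "x \<in> X"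
  proof (rule ccontr)
    assume "x \<notin> X"
    then obtain e where e: "e > 0" "ball x e \<subseteq> -X"
      using X open_contains_ball[of "-X"] by auto
    have "emeasure \<nu> (ball x e) \<le> emeasure \<nu> (-X)"
      using e sets X by (intro emeasure_mono) auto
    with nX x e show False unfolding msupport_def by auto
  qed
qed

lemma msupport_density_affine:
  fixes \<nu> :: "'a::euclidean_space measure"
  assumes sets: "sets \<nu> = sets borel" and X: "closed X" and nX: "emeasure \<nu> (-X) = 0"
    and pos: "\<forall>x\<in>X. \<alpha> + v \<bullet> x > 0" and a: "a > 0"
  shows "msupport (density \<nu> (\<lambda>x. ennreal (a * (\<alpha> + v \<bullet> x)))) = msupport \<nu>"
proof -
  define w where "w x = ennreal (a * (\<alpha> + v \<bullet> x))" for x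
  have wm: "w \<in> borel_measurable \<nu>"
    unfolding w_def using sets by (simp add: measurable_cong_sets[OF sets refl])
  have meq: "emeasure (density \<nu> w) A = (\<integral>\<^sup>+ x. w x * indicator A x \<partial>\<nu>)" if "A \<in> sets borel" for A
    using that sets wm by (intro emeasure_density) auto
  have "x \<in> msupport (density \<nu> w) \<longleftrightarrow> x \<in> msupport \<nu>" for x
  proof
    assume x: "x \<in> msupport (density \<nu> w)"
    show "x \<in> msupport \<nu>" unfolding msupport_def
    proof (intro CollectI allI impI)
      fix e :: real assume e: "e > 0"
      show "emeasure \<nu> (ball x e) > 0"
      proof (rule ccontr)
        assume "\<not> emeasure \<nu> (ball x e) > 0"
        then have "ball x e \<in> null_sets \<nu>" using sets by (auto simp: null_sets_def)
        then have "(\<integral>\<^sup>+ y. w y * indicator (ball x e) y \<partial>\<nu>) = 0" by (rule nn_integral_null_set)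
        with meq[of "ball x e"] x e show False unfolding msupport_def by auto
      qed
    qed
  next
    assume x: "x \<in> msupport \<nu>"
    then have xX: "x \<in> X" using msupport_subset[OF sets X nX] by auto
    show "x \<in> msupport (density \<nu> w)" unfolding msupport_def
    proof (intro CollectI allI impI)
      fix e :: real assume e: "e > 0"
      define lx where "lx = \<alpha> + v \<bullet> x"
      have lx: "lx > 0" using pos xX lx_def by auto
      have "continuous (at x) (\<lambda>y. \<alpha> + v \<bullet> y)" by (intro continuous_intros)
      then obtain d where d: "d > 0" "\<forall>y. dist y x < d \<longrightarrow> dist (\<alpha> + v \<bullet> y) lx < lx / 2"
        using lx unfolding continuous_at_eps_delta lx_def by (metis half_gt_zero)
      define e' where "e' = min d e"
      have e': "e' > 0" "ball x e' \<subseteq> ball x e" using d e by (auto simp: e'_def)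
      have lb: "\<forall>y\<in>ball x e'. \<alpha> + v \<bullet> y > lx / 2"
      proof
        fix y assume "y \<in> ball x e'"
        then have "dist y x < d" by (auto simp: e'_def dist_commute)
        with d have "dist (\<alpha> + v \<bullet> y) lx < lx / 2" by auto
        then show "\<alpha> + v \<bullet> y > lx / 2" unfolding dist_real_def by linarith
      qed
      have "ennreal (a * lx / 2) * emeasure \<nu> (ball x e') = (\<integral>\<^sup>+ y. ennreal (a * lx / 2) * indicator (ball x e') y \<partial>\<nu>)"
        using sets by (subst nn_integral_cmult_indicator) auto
      also have "\<dots> \<le> (\<integral>\<^sup>+ y. w y * indicator (ball x e') y \<partial>\<nu>)"
      proof (intro nn_integral_mono)
        fix y
        show "ennreal (a * lx / 2) * indicator (ball x e') y \<le> w y * indicator (ball x e') y"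
        proof (cases "y \<in> ball x e'")
          case True
          then have "\<alpha> + v \<bullet> y > lx / 2" using lb by blast
          then have "a * lx / 2 \<le> a * (\<alpha> + v \<bullet> y)" using a by (simp add: mult_left_mono)
          then show ?thesis using True unfolding w_def by (simp add: ennreal_leI)
        qed simp
      qed
      also have "\<dots> = emeasure (density \<nu> w) (ball x e')" using meq by simp
      also have "\<dots> \<le> emeasure (density \<nu> w) (ball x e)"
        using e' sets by (intro emeasure_mono) auto
      finally have le: "ennreal (a * lx / 2) * emeasure \<nu> (ball x e') \<le> emeasure (density \<nu> w) (ball x e)" .
      have "emeasure \<nu> (ball x e') > 0" using x e' unfolding msupport_def by auto
      moreover have "ennreal (a * lx / 2) > 0" using a lx by simp
      ultimately have "ennreal (a * lx / 2) * emeasure \<nu> (ball x e') > 0"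
        by (simp add: ennreal_zero_less_mult_iff)
      with le show "emeasure (density \<nu> w) (ball x e) > 0" by order
    qed
  qed
  then show ?thesis unfolding w_def by blast
qed

lemma sets_lebesgue_on_affine[simp]: "sets (lebesgue_on_affine E) = sets borel"
  unfolding lebesgue_on_affine_def Let_def by simp

lemma slc_affine_weight:
  fixes \<nu> :: "'a::euclidean_space measure"
  assumes slc: "strongly_logconcave \<mu> N \<nu>"
    and sets: "sets \<nu> = sets borel" and X: "closed X" and nX: "emeasure \<nu> (-X) = 0"
    and pos: "\<forall>x\<in>X. \<alpha> + v \<bullet> x > 0" and a: "a > 0"
  shows "strongly_logconcave \<mu> N (density \<nu> (\<lambda>x. ennreal (a * (\<alpha> + v \<bullet> x))))"
proof -
  define w where "w x = ennreal (a * (\<alpha> + v \<bullet> x))" for x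
  have supp: "msupport (density \<nu> w) = msupport \<nu>"
    unfolding w_def by (rule msupport_density_affine[OF sets X nX pos a])
  define mE where "mE = lebesgue_on_affine (affine hull (msupport \<nu>))"
  obtain g :: "'a \<Rightarrow> real" where gm: "g \<in> borel_measurable borel" and g0: "\<forall>x. g x \<ge> 0"
    and gK: "\<forall>K. compact K \<longrightarrow> (\<integral>\<^sup>+ x. ennreal (g x * indicator K x) \<partial>mE) < \<infinity>"
    and nu: "\<nu> = density mE (\<lambda>x. ennreal (g x))"
    and gc: "strongly_convex_on (affine hull (msupport \<nu>)) \<mu> N (neglog g)"
    using slc unfolding strongly_logconcave_def Let_def mE_def by blast
  define g1 where "g1 x = g x * max 0 (a * (\<alpha> + v \<bullet> x))" for x
  have setsmE: "sets mE = sets borel" unfolding mE_def by simp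
  have g1m: "g1 \<in> borel_measurable borel" unfolding g1_def using gm by measurable
  have g10: "\<forall>x. g1 x \<ge> 0" using g0 unfolding g1_def by auto
  have dens: "density \<nu> w = density mE (\<lambda>x. ennreal (g1 x))"
  proof -
    have "density \<nu> w = density mE (\<lambda>x. ennreal (g x) * w x)"
      unfolding nu
    proof (rule density_density_eq)
      show "(\<lambda>x. ennreal (g x)) \<in> borel_measurable mE"
        unfolding measurable_cong_sets[OF setsmE refl] using gm by measurable
      show "w \<in> borel_measurable mE"
        unfolding measurable_cong_sets[OF setsmE refl] w_def by measurable
    qed
    also have "(\<lambda>x. ennreal (g x) * w x) = (\<lambda>x. ennreal (g1 x))"
    proof
      fix x
      have "w x = ennreal (max 0 (a * (\<alpha> + v \<bullet> x)))" unfolding w_def by (simp add: ennreal_max_0)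
      then show "ennreal (g x) * w x = ennreal (g1 x)"
        unfolding g1_def using g0 by (simp add: ennreal_mult)
    qed
    finally show ?thesis .
  qed
  have g1K: "(\<integral>\<^sup>+ x. ennreal (g1 x * indicator K x) \<partial>mE) < \<infinity>" if K: "compact K" for K
  proof -
    obtain B where B: "B > 0" "\<forall>x\<in>K. norm x \<le> B"
      using compact_imp_bounded[OF K] bounded_pos by blast
    define C where "C = a * (\<bar>\<alpha>\<bar> + norm v * B)"
    have C0: "C \<ge> 0" unfolding C_def using a B by auto
    have bnd: "max 0 (a * (\<alpha> + v \<bullet> x)) \<le> C" if "x \<in> K" for x
    proof -
      have "v \<bullet> x \<le> norm v * norm x" by (rule norm_cauchy_schwarz)
      also have "\<dots> \<le> norm v * B" using B that by (simp add: mult_left_mono)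
      finally have "\<alpha> + v \<bullet> x \<le> \<bar>\<alpha>\<bar> + norm v * B" by linarith
      then show ?thesis using a C0 unfolding C_def by (simp add: mult_left_mono)
    qed
    have "(\<integral>\<^sup>+ x. ennreal (g1 x * indicator K x) \<partial>mE) \<le> (\<integral>\<^sup>+ x. ennreal C * ennreal (g x * indicator K x) \<partial>mE)"
    proof (intro nn_integral_mono)
      fix x
      show "ennreal (g1 x * indicator K x) \<le> ennreal C * ennreal (g x * indicator K x)"
      proof (cases "x \<in> K")
        case True
        have "g1 x \<le> C * g x" unfolding g1_def using bnd[OF True] g0
          by (metis mult.commute mult_left_mono)
        then show ?thesis using True C0 g0 by (simp add: ennreal_mult[symmetric] ennreal_leI)
      qed simp
    qed
    also have "\<dots> = ennreal C * (\<integral>\<^sup>+ x. ennreal (g x * indicator K x) \<partial>mE)"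
    proof (rule nn_integral_cmult)
      have Kb[measurable]: "K \<in> sets borel" using K by (simp add: compact_imp_closed borel_closed)
      note gm[measurable]
      show "(\<lambda>x. ennreal (g x * indicator K x)) \<in> borel_measurable mE"
        unfolding measurable_cong_sets[OF setsmE refl] by measurable
    qed
    also have "\<dots> < \<infinity>" using gK K by (simp add: ennreal_mult_less_top)
    finally show ?thesis .
  qed
  have "strongly_convex_on (affine hull (msupport \<nu>)) \<mu> N (neglog g1)"
    unfolding g1_def by (rule sc_mult_affine[OF gc a])
  then show ?thesis
    unfolding strongly_logconcave_def Let_def w_def[symmetric] supp mE_def[symmetric]
    using g1m g10 g1K dens by blast
qed

lemma cond_of_integral:
  fixes h :: "'b \<Rightarrow> real"
  assumes "integrable M h" "0 \<le> integral\<^sup>L M h"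
  shows "(\<integral>\<^sup>+ x. ennreal (- h x) \<partial>M) \<le> (\<integral>\<^sup>+ x. ennreal (h x) \<partial>M)"
proof -
  have f1: "(\<integral>\<^sup>+ x. ennreal (h x) \<partial>M) \<noteq> \<infinity>" and f2: "(\<integral>\<^sup>+ x. ennreal (- h x) \<partial>M) \<noteq> \<infinity>"
    using assms(1) unfolding real_integrable_def by auto
  have "enn2real (\<integral>\<^sup>+ x. ennreal (- h x) \<partial>M) \<le> enn2real (\<integral>\<^sup>+ x. ennreal (h x) \<partial>M)"
    using assms real_lebesgue_integral_def[OF assms(1)] by simp
  then have le: "ennreal (enn2real (\<integral>\<^sup>+ x. ennreal (- h x) \<partial>M)) \<le> ennreal (enn2real (\<integral>\<^sup>+ x. ennreal (h x) \<partial>M))"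
    by (rule ennreal_leI)
  have e1: "ennreal (enn2real (\<integral>\<^sup>+ x. ennreal (h x) \<partial>M)) = (\<integral>\<^sup>+ x. ennreal (h x) \<partial>M)"
    using f1 by (intro ennreal_enn2real) (simp add: less_top[symmetric])
  have e2: "ennreal (enn2real (\<integral>\<^sup>+ x. ennreal (- h x) \<partial>M)) = (\<integral>\<^sup>+ x. ennreal (- h x) \<partial>M)"
    using f2 by (intro ennreal_enn2real) (simp add: less_top[symmetric])
  show ?thesis using le unfolding e1 e2 .
qed

lemma integral_of_cond:
  fixes F :: "'b \<Rightarrow> real"
  assumes Fm: "F \<in> borel_measurable M" and fin: "emeasure M (space M) < \<infinity>"
    and bnd: "\<And>x. F x \<le> B"
    and cond: "(\<integral>\<^sup>+ x. ennreal (- F x) \<partial>M) \<le> (\<integral>\<^sup>+ x. ennreal (F x) \<partial>M)"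
  shows "integrable M F" "0 \<le> integral\<^sup>L M F"
proof -
  have "(\<integral>\<^sup>+ x. ennreal (F x) \<partial>M) \<le> (\<integral>\<^sup>+ x. ennreal B \<partial>M)"
    using bnd by (intro nn_integral_mono ennreal_leI) auto
  also have "\<dots> = ennreal B * emeasure M (space M)" by simp
  also have "\<dots> < \<infinity>" using fin by (simp add: ennreal_mult_less_top)
  finally have f1: "(\<integral>\<^sup>+ x. ennreal (F x) \<partial>M) < \<infinity>" .
  have f2: "(\<integral>\<^sup>+ x. ennreal (- F x) \<partial>M) < \<infinity>" by (rule le_less_trans[OF cond f1])
  show int: "integrable M F" unfolding real_integrable_def using Fm f1 f2 by auto
  have "enn2real (\<integral>\<^sup>+ x. ennreal (- F x) \<partial>M) \<le> enn2real (\<integral>\<^sup>+ x. ennreal (F x) \<partial>M)"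
    using cond f1 by (intro enn2real_mono) auto
  then show "0 \<le> integral\<^sup>L M F" using real_lebesgue_integral_def[OF int] by simp
qed

lemma integrable_on_X:
  fixes h :: "'a::euclidean_space \<Rightarrow> 'c::{banach, second_countable_topology}"
  assumes sets: "sets \<pi> = sets borel" and fin: "emeasure \<pi> X < \<infinity>"
    and Xb: "X \<in> sets borel" and aeX: "AE x in \<pi>. x \<in> X"
    and hm: "h \<in> borel_measurable borel" and bnd: "\<forall>x\<in>X. norm (h x) \<le> B"
  shows "integrable \<pi> h"
proof (rule integrableI_bounded_set[where A=X and B=B])
  show "X \<in> sets \<pi>" using sets Xb by simp
  show "h \<in> borel_measurable \<pi>" unfolding measurable_cong_sets[OF sets refl] using hm .
  show "emeasure \<pi> X < \<infinity>" by (rule fin)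
  show "AE x in \<pi>. x \<in> X \<longrightarrow> norm (h x) \<le> B" using bnd by simp
  show "AE x in \<pi>. x \<notin> X \<longrightarrow> h x = 0" using aeX by eventually_elim auto
qed

lemma weight_in_S:
  fixes X :: "'a::euclidean_space set" and \<pi> :: "'a measure"
  assumes piS: "\<pi> \<in> S_set X N \<mu> \<beta> f" and X: "compact X"
    and Fm: "(\<lambda>x. f x * indicator X x) \<in> borel_measurable borel"
    and fM: "\<forall>x\<in>X. f x \<le> M"
    and \<beta>c: "continuous_on X \<beta>" and b0: "b0 > 0" "\<forall>x\<in>X. b0 \<le> \<beta> x" and B1: "\<forall>x\<in>X. \<beta> x \<le> B1"
    and \<delta>: "\<delta> > 0" "\<forall>x\<in>X. \<delta> \<le> \<alpha> + v \<bullet> x \<and> \<alpha> + v \<bullet> x \<le> C"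
    and fl: "0 \<le> (\<integral>x. (\<alpha> + v \<bullet> x) * (f x * indicator X x) \<partial>\<pi>)"
  shows "density \<pi> (\<lambda>x. ennreal ((1 / (\<integral>x. \<alpha> + v \<bullet> x \<partial>\<pi>)) * (\<alpha> + v \<bullet> x))) \<in> S_set X N \<mu> \<beta> f"
proof -
  have prob: "prob_space \<pi>" and sets: "sets \<pi> = sets borel" and nX: "emeasure \<pi> (-X) = 0"
    and slc1: "strongly_logconcave \<mu> N \<pi>" and slc2: "strongly_logconcave \<mu> N (renorm X \<beta> \<pi>)"
    and cond: "(\<integral>\<^sup>+ x. ennreal (- (f x * indicator X x)) \<partial>\<pi>) \<le> (\<integral>\<^sup>+ x. ennreal (f x * indicator X x) \<partial>\<pi>)"
    using piS unfolding S_set_def by auto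
  have space: "space \<pi> = UNIV" using sets_eq_imp_space_eq[OF sets] by simp
  have clX: "closed X" using X by (rule compact_imp_closed)
  have Xb[measurable]: "X \<in> sets borel" using clX by (rule borel_closed)
  have nXb: "-X \<in> sets \<pi>" using Xb sets by auto
  have aeX: "AE x in \<pi>. x \<in> X" by (rule AE_I[where N="-X"]) (use nX nXb in auto)
  have sp1: "emeasure \<pi> (space \<pi>) = 1" using prob by (simp add: prob_space.emeasure_space_1)
  have msp1: "measure \<pi> (space \<pi>) = 1" using prob by (simp add: prob_space.prob_space)
  have finX: "emeasure \<pi> X < \<infinity>"
  proof -
    have "emeasure \<pi> X \<le> emeasure \<pi> (space \<pi>)" using Xb sets by (intro emeasure_mono) (auto simp: space)
    then show ?thesis using sp1 by (simp add: le_less_trans)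
  qed
  note intX = integrable_on_X[OF sets finX Xb aeX]
  have intc: "integrable \<pi> (\<lambda>x. k)" for k :: real
    using prob by (simp add: prob_space.finite_measure finite_measure.integrable_const)
  have measE: "h \<in> borel_measurable \<pi>" if "h \<in> borel_measurable borel" for h :: "'a \<Rightarrow> 'z::topological_space"
    unfolding measurable_cong_sets[OF sets refl] using that .
  define ell where "ell x = \<alpha> + v \<bullet> x" for x
  have ellm[measurable]: "ell \<in> borel_measurable borel" unfolding ell_def by measurable
  have ellb: "\<forall>x\<in>X. \<delta> \<le> ell x \<and> ell x \<le> C" using \<delta> unfolding ell_def by auto
  define c where "c = (\<integral>x. ell x \<partial>\<pi>)"
  have intl: "integrable \<pi> ell" using ellb \<delta> by (intro intX[where B=C] ellm) auto
  have c\<delta>: "\<delta> \<le> c"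
  proof -
    have "(\<integral>x. \<delta> \<partial>\<pi>) \<le> c" unfolding c_def
      using intl aeX ellb intc by (intro integral_mono_AE) (auto elim!: eventually_mono)
    then show ?thesis using msp1 by simp
  qed
  have c0: "c > 0" using c\<delta> \<delta> by linarith
  define w where "w x = (1 / c) * ell x" for x
  have wm[measurable]: "w \<in> borel_measurable borel" unfolding w_def by measurable
  have wX: "\<forall>x\<in>X. 0 < w x \<and> w x \<le> C / c" using ellb c0 \<delta> unfolding w_def
    by (auto simp: divide_right_mono)
  define \<pi>1 where "\<pi>1 = density \<pi> (\<lambda>x. ennreal (w x))"
  have sets1: "sets \<pi>1 = sets borel" unfolding \<pi>1_def using sets by simp
  have intw: "integrable \<pi> w" unfolding w_def using intl by simp
  have "emeasure \<pi>1 (space \<pi>1) = (\<integral>\<^sup>+ x. ennreal (w x) \<partial>\<pi>)"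
  proof -
    have "emeasure \<pi>1 (space \<pi>1) = emeasure \<pi>1 (space \<pi>)" unfolding \<pi>1_def by simp
    also have "\<dots> = (\<integral>\<^sup>+ x. ennreal (w x) * indicator (space \<pi>) x \<partial>\<pi>)"
      unfolding \<pi>1_def by (rule emeasure_density) (auto intro: measE)
    finally show ?thesis by (simp add: space)
  qed
  also have "\<dots> = ennreal (\<integral>x. w x \<partial>\<pi>)"
    using intw aeX wX by (intro nn_integral_eq_integral) (auto elim!: eventually_mono)
  also have "(\<integral>x. w x \<partial>\<pi>) = 1" unfolding w_def using c0 by (simp add: c_def)
  finally have prob1: "prob_space \<pi>1" by (intro prob_spaceI) simp
  have nX1: "emeasure \<pi>1 (-X) = 0"
  proof -
    have "-X \<in> null_sets \<pi>" using nX nXb by auto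
    then show ?thesis unfolding \<pi>1_def
      by (simp add: emeasure_density measE nXb nn_integral_null_set)
  qed
  have slc1': "strongly_logconcave \<mu> N \<pi>1"
  proof -
    have p: "\<forall>x\<in>X. \<alpha> + v \<bullet> x > 0" using \<delta> by force
    have "1 / c > 0" using c0 by simp
    from slc_affine_weight[OF slc1 sets clX nX p this] show ?thesis
      unfolding \<pi>1_def w_def ell_def .
  qed
  define F where "F x = f x * indicator X x" for x
  have Fm'[measurable]: "F \<in> borel_measurable borel" unfolding F_def using Fm .
  have Fb: "F x \<le> max M 0" for x using fM unfolding F_def by (auto simp: indicator_def)
  have finsp: "emeasure \<pi> (space \<pi>) < \<infinity>" using sp1 by simp
  have intF: "integrable \<pi> F" and IF: "0 \<le> integral\<^sup>L \<pi> F"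
    using integral_of_cond[OF measE[OF Fm'] finsp Fb] cond unfolding F_def by auto
  define h where "h x = w x * F x" for x
  have hm[measurable]: "h \<in> borel_measurable borel" unfolding h_def by measurable
  have inth: "integrable \<pi> h"
  proof -
    have i1: "integrable \<pi> (\<lambda>x. C / c * F x)" using intF by simp
    have "AE x in \<pi>. norm (h x) \<le> norm (C / c * F x)"
      using aeX
    proof eventually_elim
      case (elim x)
      then have "0 < w x" "w x \<le> C / c" using wX by auto
      then have cc: "0 < C / c" by linarith
      have r: "norm (C / c * F x) = (C / c) * \<bar>F x\<bar>" proof -
        have "C > 0" using cc c0 by (simp add: zero_less_divide_iff)
        then show ?thesis unfolding real_norm_def abs_mult using c0 by simp
      qed
      have l: "norm (h x) = w x * \<bar>F x\<bar>" using elim(1) \<open>0 < w x\<close> unfolding h_def by (simp add: abs_mult)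
      have "w x * \<bar>F x\<bar> \<le> (C / c) * \<bar>F x\<bar>" using \<open>w x \<le> C / c\<close> by (intro mult_right_mono) auto
      then show ?case using l r by simp
    qed
    from Bochner_Integration.integrable_bound[OF i1 measE[OF hm] this] show ?thesis .
  qed
  have Ih: "0 \<le> integral\<^sup>L \<pi> h"
  proof -
    have "integral\<^sup>L \<pi> h = (1 / c) * (\<integral>x. (\<alpha> + v \<bullet> x) * (f x * indicator X x) \<partial>\<pi>)"
      unfolding h_def w_def ell_def F_def by (simp add: mult.assoc)
    then show ?thesis using fl c0 by simp
  qed
  have hc: "(\<integral>\<^sup>+ x. ennreal (- h x) \<partial>\<pi>) \<le> (\<integral>\<^sup>+ x. ennreal (h x) \<partial>\<pi>)"
    by (rule cond_of_integral[OF inth Ih])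
  have e1: "(\<integral>\<^sup>+ x. ennreal (F x) \<partial>\<pi>1) = (\<integral>\<^sup>+ x. ennreal (h x) \<partial>\<pi>)"
  proof -
    have "(\<integral>\<^sup>+ x. ennreal (F x) \<partial>\<pi>1) = (\<integral>\<^sup>+ x. ennreal (w x) * ennreal (F x) \<partial>\<pi>)"
      unfolding \<pi>1_def by (rule nn_integral_density) (auto intro: measE)
    also have "\<dots> = (\<integral>\<^sup>+ x. ennreal (h x) \<partial>\<pi>)"
      using aeX
    proof (intro nn_integral_cong_AE, eventually_elim)
      case (elim x)
      then have "0 \<le> w x" using wX by auto
      then show ?case unfolding h_def by (simp add: ennreal_mult')
    qed
    finally show ?thesis .
  qed
  have e2: "(\<integral>\<^sup>+ x. ennreal (- F x) \<partial>\<pi>1) = (\<integral>\<^sup>+ x. ennreal (- h x) \<partial>\<pi>)"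
  proof -
    have "(\<integral>\<^sup>+ x. ennreal (- F x) \<partial>\<pi>1) = (\<integral>\<^sup>+ x. ennreal (w x) * ennreal (- F x) \<partial>\<pi>)"
      unfolding \<pi>1_def by (rule nn_integral_density) (auto intro: measE)
    also have "\<dots> = (\<integral>\<^sup>+ x. ennreal (- h x) \<partial>\<pi>)"
      using aeX
    proof (intro nn_integral_cong_AE, eventually_elim)
      case (elim x)
      then have "0 \<le> w x" using wX by auto
      then have "ennreal (w x * (- F x)) = ennreal (w x) * ennreal (- F x)" by (rule ennreal_mult')
      then show ?case unfolding h_def by simp
    qed
    finally show ?thesis .
  qed
  have cond1: "(\<integral>\<^sup>+ x. ennreal (- (f x * indicator X x)) \<partial>\<pi>1) \<le> (\<integral>\<^sup>+ x. ennreal (f x * indicator X x) \<partial>\<pi>1)"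
    using hc e1 e2 unfolding F_def by simp
  define bX where "bX x = \<beta> x * indicator X x" for x
  have bXm[measurable]: "bX \<in> borel_measurable borel"
  proof -
    have "(\<lambda>x. indicator X x *\<^sub>R \<beta> x) \<in> borel_measurable borel"
      by (rule borel_measurable_continuous_on_indicator[OF Xb \<beta>c])
    moreover have "(\<lambda>x. indicator X x *\<^sub>R \<beta> x) = bX" unfolding bX_def by (auto simp: fun_eq_iff)
    ultimately show ?thesis by simp
  qed
  have bXb: "\<forall>x\<in>X. b0 \<le> bX x \<and> bX x \<le> B1" using b0 B1 unfolding bX_def by auto
  have intbX: "integrable \<pi> bX" using bXb b0 by (intro intX[where B=B1] bXm) force
  define Z where "Z = (\<integral>x. bX x \<partial>\<pi>)"
  have Zb: "b0 \<le> Z"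
  proof -
    have "(\<integral>x. b0 \<partial>\<pi>) \<le> Z" unfolding Z_def
      using intbX aeX bXb intc by (intro integral_mono_AE) (auto elim!: eventually_mono)
    then show ?thesis using msp1 by simp
  qed
  have Z0: "Z > 0" using Zb b0 by linarith
  define Z1 where "Z1 = (\<integral>x. bX x \<partial>\<pi>1)"
  have Z1eq: "Z1 = (\<integral>x. w x * bX x \<partial>\<pi>)"
  proof -
    have "Z1 = (\<integral>x. w x *\<^sub>R bX x \<partial>\<pi>)" unfolding Z1_def \<pi>1_def
      using aeX wX by (intro integral_density measE) (auto elim!: eventually_mono)
    then show ?thesis by simp
  qed
  have Z1b: "\<delta> / c * b0 \<le> Z1"
  proof -
    have wbX: "\<forall>x\<in>X. \<delta> / c * b0 \<le> w x * bX x \<and> w x * bX x \<le> C / c * B1"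
    proof
      fix x assume x: "x \<in> X"
      have "\<delta> / c \<le> w x" using ellb x c0 unfolding w_def by (auto simp: divide_right_mono)
      moreover have "w x \<le> C / c" using wX x by auto
      moreover have "b0 \<le> bX x" "bX x \<le> B1" using bXb x by auto
      moreover have "0 \<le> \<delta> / c" using \<delta> c0 by simp
      ultimately show "\<delta> / c * b0 \<le> w x * bX x \<and> w x * bX x \<le> C / c * B1"
        using b0 by (intro conjI mult_mono) auto
    qed
    have intwb: "integrable \<pi> (\<lambda>x. w x * bX x)"
      using wbX \<delta> c0 b0 by (intro intX[where B="C / c * B1"]) (auto, smt (verit) divide_pos_pos mult_pos_pos)
    have "(\<integral>x. \<delta> / c * b0 \<partial>\<pi>) \<le> Z1" unfolding Z1eq
      using intwb aeX wbX intc by (intro integral_mono_AE) (auto elim!: eventually_mono)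
    then show ?thesis using msp1 by simp
  qed
  have Z10: "Z1 > 0" using Z1b \<delta> c0 b0 by (smt (verit) divide_pos_pos mult_pos_pos)
  define \<pi>' where "\<pi>' = density \<pi> (\<lambda>x. ennreal (bX x / Z))"
  have ren: "renorm X \<beta> \<pi> = \<pi>'" unfolding renorm_def Let_def \<pi>'_def Z_def bX_def by simp
  have ren1: "renorm X \<beta> \<pi>1 = density \<pi>1 (\<lambda>x. ennreal (bX x / Z1))"
    unfolding renorm_def Let_def Z1_def bX_def by simp
  define k where "k = Z / (c * Z1)"
  have k0: "k > 0" unfolding k_def using Z0 c0 Z10 by simp
  have "renorm X \<beta> \<pi>1 = density \<pi> (\<lambda>x. ennreal (w x) * ennreal (bX x / Z1))"
    unfolding ren1 by (unfold \<pi>1_def, rule density_density_eq) (auto intro: measE)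
  also have "\<dots> = density \<pi> (\<lambda>x. ennreal (bX x / Z) * ennreal (k * (\<alpha> + v \<bullet> x)))"
  proof (rule arg_cong[where f="density \<pi>"], rule ext)
    fix x
    show "ennreal (w x) * ennreal (bX x / Z1) = ennreal (bX x / Z) * ennreal (k * (\<alpha> + v \<bullet> x))"
    proof (cases "x \<in> X")
      case True
      have wx: "w x > 0" using wX True by auto
      have bx: "bX x > 0" using bXb b0 True by force
      have "ennreal (w x) * ennreal (bX x / Z1) = ennreal (w x * (bX x / Z1))"
        using wx bx Z10 by (intro ennreal_mult[symmetric]) auto
      also have "w x * (bX x / Z1) = bX x / Z * (k * (\<alpha> + v \<bullet> x))"
        unfolding w_def k_def ell_def using Z0 c0 Z10 by (simp add: field_simps)
      also have "ennreal (bX x / Z * (k * (\<alpha> + v \<bullet> x))) = ennreal (bX x / Z) * ennreal (k * (\<alpha> + v \<bullet> x))"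
      proof (rule ennreal_mult)
        have "\<alpha> + v \<bullet> x > 0" using \<delta> True by force
        then show "0 \<le> k * (\<alpha> + v \<bullet> x)" using k0 by simp
        show "0 \<le> bX x / Z" using bx Z0 by simp
      qed
      finally show ?thesis .
    next
      case False
      then show ?thesis unfolding bX_def by simp
    qed
  qed
  also have "\<dots> = density \<pi>' (\<lambda>x. ennreal (k * (\<alpha> + v \<bullet> x)))"
    unfolding \<pi>'_def by (rule density_density_eq[symmetric]) (auto intro: measE)
  finally have ren1': "renorm X \<beta> \<pi>1 = density \<pi>' (\<lambda>x. ennreal (k * (\<alpha> + v \<bullet> x)))" .
  have sets': "sets \<pi>' = sets borel" unfolding \<pi>'_def using sets by simp
  have nX': "emeasure \<pi>' (-X) = 0"
  proof -
    have "emeasure \<pi>' (-X) = (\<integral>\<^sup>+ x. ennreal (bX x / Z) * indicator (-X) x \<partial>\<pi>)"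
      unfolding \<pi>'_def by (rule emeasure_density) (auto intro: measE nXb)
    also have "\<dots> = (\<integral>\<^sup>+ x. 0 \<partial>\<pi>)" by (intro nn_integral_cong) (auto simp: bX_def indicator_def)
    finally show ?thesis by simp
  qed
  have slc2': "strongly_logconcave \<mu> N (renorm X \<beta> \<pi>1)"
  proof -
    have p: "\<forall>x\<in>X. \<alpha> + v \<bullet> x > 0" using \<delta> by force
    from slc_affine_weight[OF slc2[unfolded ren] sets' clX nX' p k0] show ?thesis
      unfolding ren1' .
  qed
  have "\<pi>1 \<in> S_set X N \<mu> \<beta> f"
    unfolding S_set_def using prob1 sets1 nX1 slc1' slc2' cond1 by blast
  then show ?thesis unfolding \<pi>1_def w_def ell_def c_def .
qed

lemma emeasure_sum_meas:
  fixes p :: "nat \<Rightarrow> 'a::topological_space measure"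
  assumes sp: "\<forall>i<n. sets (p i) = sets borel" and A: "A \<in> sets borel"
  shows "emeasure (measure_of UNIV (sets borel) (\<lambda>A. \<Sum>i<n. r i * emeasure (p i) A)) A
       = (\<Sum>i<n. r i * emeasure (p i) A)"
proof (rule emeasure_measure_of_sigma)
  show "sigma_algebra UNIV (sets borel)"
    by (metis sets.sigma_algebra_axioms space_borel)
  show "positive (sets borel) (\<lambda>A. \<Sum>i<n. r i * emeasure (p i) A)"
    unfolding positive_def by simp
  show "countably_additive (sets borel) (\<lambda>A. \<Sum>i<n. r i * emeasure (p i) A)"
  proof (rule countably_additiveI)
    fix B :: "nat \<Rightarrow> 'a set" assume B: "range B \<subseteq> sets borel" "disjoint_family B"
    have "(\<Sum>k. \<Sum>i<n. r i * emeasure (p i) (B k)) = (\<Sum>i<n. \<Sum>k. r i * emeasure (p i) (B k))"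
      by (rule suminf_sum) simp
    also have "\<dots> = (\<Sum>i<n. r i * emeasure (p i) (\<Union>k. B k))"
    proof (rule sum.cong[OF refl])
      fix i assume "i \<in> {..<n}"
      then have "range B \<subseteq> sets (p i)" using sp B by auto
      then show "(\<Sum>k. r i * emeasure (p i) (B k)) = r i * emeasure (p i) (\<Union>k. B k)"
        using B by (simp add: suminf_emeasure)
    qed
    finally show "(\<Sum>k. \<Sum>i<n. r i * emeasure (p i) (B k)) = (\<Sum>i<n. r i * emeasure (p i) (\<Union>k. B k))" .
  qed
qed (rule A)

lemma extreme_in_S:
  fixes S :: "'a::topological_space measure set"
  assumes ext: "extreme_meas (conv_meas S) \<pi>" and SS: "\<forall>q\<in>S. sets q = sets borel"
  shows "\<pi> \<in> S"
proof -
  have inC: "\<pi> \<in> conv_meas S" using ext unfolding extreme_meas_def by auto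
  then obtain n :: nat and c :: "nat \<Rightarrow> real" and p :: "nat \<Rightarrow> 'a measure" where sets: "sets \<pi> = sets borel"
    and pc: "\<forall>i<n. p i \<in> S \<and> c i \<ge> (0::real)" and s1: "(\<Sum>i<n. c i) = 1"
    and eq: "\<forall>A\<in>sets borel. emeasure \<pi> A = (\<Sum>i<n. ennreal (c i) * emeasure (p i) A)"
    unfolding conv_meas_def by blast
  obtain j where j: "j < n" "c j > 0"
  proof (rule ccontr)
    assume "\<not> thesis"
    then have "\<forall>i<n. c i = 0" using pc that by force
    then show False using s1 by simp
  qed
  have sp: "\<forall>i<n. sets (p i) = sets borel" using pc SS by auto
  have split: "(\<Sum>i<n. g i) = g j + (\<Sum>i\<in>{..<n} - {j}. g i)" for g :: "nat \<Rightarrow> 'b::comm_monoid_add"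
    using j by (subst sum.remove[of _ j]) auto
  have cj1: "c j \<le> 1"
  proof -
    have "(\<Sum>i\<in>{..<n} - {j}. c i) \<ge> 0" using pc by (intro sum_nonneg) auto
    then show ?thesis using s1 split[of c] by linarith
  qed
  show ?thesis
  proof (cases "c j = 1")
    case True
    have z: "\<forall>i\<in>{..<n} - {j}. c i = 0"
    proof -
      have "(\<Sum>i\<in>{..<n} - {j}. c i) = 0" using s1 split[of c] True by linarith
      then show ?thesis using pc by (subst (asm) sum_nonneg_eq_0_iff) auto
    qed
    have "\<pi> = p j"
    proof (rule measure_eqI)
      show "sets \<pi> = sets (p j)" using sets sp j by simp
      fix A assume "A \<in> sets \<pi>"
      then have A: "A \<in> sets borel" using sets by simp
      have "emeasure \<pi> A = ennreal (c j) * emeasure (p j) A + (\<Sum>i\<in>{..<n} - {j}. ennreal (c i) * emeasure (p i) A)"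
        using eq A split[of "\<lambda>i. ennreal (c i) * emeasure (p i) A"] by simp
      also have "(\<Sum>i\<in>{..<n} - {j}. ennreal (c i) * emeasure (p i) A) = 0" using z by simp
      finally show "emeasure \<pi> A = emeasure (p j) A" using True by simp
    qed
    then show ?thesis using pc j by simp
  next
    case False
    then have cj: "c j < 1" using cj1 by simp
    define c' where "c' i = (if i = j then 0 else c i / (1 - c j))" for i
    define \<nu>2 where "\<nu>2 = measure_of UNIV (sets borel) (\<lambda>A. \<Sum>i<n. ennreal (c' i) * emeasure (p i) A)"
    have e2: "emeasure \<nu>2 A = (\<Sum>i<n. ennreal (c' i) * emeasure (p i) A)" if "A \<in> sets borel" for A
      unfolding \<nu>2_def by (rule emeasure_sum_meas[OF sp that])
    have sets2: "sets \<nu>2 = sets borel" unfolding \<nu>2_def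
      by (metis sets.sigma_algebra_axioms sigma_algebra.sets_measure_of_eq space_borel)
    have "(\<Sum>i<n. c' i) = (\<Sum>i\<in>{..<n} - {j}. c i / (1 - c j))"
      using split[of c'] unfolding c'_def by (auto intro!: sum.cong)
    also have "\<dots> = (\<Sum>i\<in>{..<n} - {j}. c i) / (1 - c j)" by (simp add: sum_divide_distrib)
    also have "\<dots> = 1" using s1 split[of c] cj by (simp add: field_simps)
    finally have s2: "(\<Sum>i<n. c' i) = 1" .
    have c'0: "\<forall>i<n. p i \<in> S \<and> c' i \<ge> 0" using pc cj unfolding c'_def by auto
    have in2: "\<nu>2 \<in> conv_meas S" unfolding conv_meas_def
      using sets2 c'0 s2 e2 by blast
    have in1: "p j \<in> conv_meas S" unfolding conv_meas_def
    proof (intro CollectI conjI exI[of _ "1::nat"] exI[of _ "\<lambda>_. 1::real"] exI[of _ "\<lambda>_. p j"])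
      show "sets (p j) = sets borel" using sp j by simp
    qed (use pc j in auto)
    have dec: "\<forall>A\<in>sets borel. emeasure \<pi> A = ennreal (c j) * emeasure (p j) A + ennreal (1 - c j) * emeasure \<nu>2 A"
    proof
      fix A :: "'a set" assume A: "A \<in> sets borel"
      have "ennreal (1 - c j) * emeasure \<nu>2 A = (\<Sum>i<n. ennreal (1 - c j) * (ennreal (c' i) * emeasure (p i) A))"
        using e2[OF A] by (simp add: sum_distrib_left)
      also have "\<dots> = (\<Sum>i<n. ennreal ((1 - c j) * c' i) * emeasure (p i) A)"
        using c'0 cj by (intro sum.cong refl) (simp add: ennreal_mult mult.assoc)
      also have "\<dots> = (\<Sum>i\<in>{..<n} - {j}. ennreal (c i) * emeasure (p i) A)"
        using split[of "\<lambda>i. ennreal ((1 - c j) * c' i) * emeasure (p i) A"] cj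
        unfolding c'_def by (auto intro!: sum.cong)
      finally show "emeasure \<pi> A = ennreal (c j) * emeasure (p j) A + ennreal (1 - c j) * emeasure \<nu>2 A"
        using eq A split[of "\<lambda>i. ennreal (c i) * emeasure (p i) A"] by simp
    qed
    have "p j = \<nu>2" using ext in1 in2 dec j cj unfolding extreme_meas_def by blast
    have "\<pi> = p j"
    proof (rule measure_eqI)
      show "sets \<pi> = sets (p j)" using sets sp j by simp
      fix A assume "A \<in> sets \<pi>"
      then have A: "A \<in> sets borel" using sets by simp
      have "emeasure \<pi> A = ennreal (c j) * emeasure (p j) A + ennreal (1 - c j) * emeasure (p j) A"
        using dec A \<open>p j = \<nu>2\<close> by simp
      also have "\<dots> = (ennreal (c j) + ennreal (1 - c j)) * emeasure (p j) A" by (simp add: distrib_right)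
      also have "ennreal (c j) + ennreal (1 - c j) = 1" using j cj by (simp add: ennreal_plus[symmetric] del: ennreal_plus)
      finally show "emeasure \<pi> A = emeasure (p j) A" by simp
    qed
    then show ?thesis using pc j by simp
  qed
qed

lemma lebesgue_on_affine_null:
  fixes E :: "'a::euclidean_space set"
  assumes aff: "affine E" and ne: "E \<noteq> {}" and cl: "closed E"
  shows "emeasure (lebesgue_on_affine E) (-E) = 0"
proof -
  define x0 where "x0 = (SOME x. x \<in> E)"
  have x0: "x0 \<in> E" unfolding x0_def using ne by (simp add: some_in_eq)
  define V where "V = (\<lambda>y. y - x0) ` E"
  have subV: "subspace V" unfolding V_def by (rule affine_diffs_subspace_subtract[OF aff x0])
  define P where "P B \<longleftrightarrow> finite B \<and> pairwise orthogonal B \<and> (\<forall>b\<in>B. norm b = 1) \<and> span B = V" for B :: "'a set"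
  obtain B0 where "B0 \<subseteq> V" "pairwise orthogonal B0" "\<And>x. x \<in> B0 \<Longrightarrow> norm x = 1"
    "independent B0" "card B0 = dim V" "span B0 = V"
    using orthonormal_basis_subspace[OF subV] by blast
  then have "P B0" unfolding P_def using independent_imp_finite by blast
  define B where "B = (SOME B. P B)"
  have PB: "P B" unfolding B_def using \<open>P B0\<close> by (rule someI)
  then have finB: "finite B" and spB: "span B = V" unfolding P_def by auto
  define \<phi> where "\<phi> t = x0 + (\<Sum>b\<in>B. t b *\<^sub>R b)" for t :: "'a \<Rightarrow> real"
  have leb: "lebesgue_on_affine E = distr (PiM B (\<lambda>_. lborel)) borel \<phi>"
    unfolding lebesgue_on_affine_def Let_def x0_def[symmetric] V_def[symmetric]
      P_def[symmetric, abs_def] B_def[symmetric] \<phi>_def by simp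
  have \<phi>m: "\<phi> \<in> borel_measurable (PiM B (\<lambda>_. lborel))"
    unfolding \<phi>_def by measurable
  have \<phi>E: "\<phi> t \<in> E" for t
  proof -
    have "(\<Sum>b\<in>B. t b *\<^sub>R b) \<in> span B" by (intro span_sum span_scale span_base) auto
    then have "(\<Sum>b\<in>B. t b *\<^sub>R b) \<in> V" using spB by simp
    then obtain y where "y \<in> E" "(\<Sum>b\<in>B. t b *\<^sub>R b) = y - x0" unfolding V_def by auto
    then show ?thesis unfolding \<phi>_def by simp
  qed
  have "-E \<in> sets borel" using cl by (simp add: borel_open open_Compl)
  then have "emeasure (lebesgue_on_affine E) (-E) = emeasure (PiM B (\<lambda>_. lborel)) (\<phi> -` (-E) \<inter> space (PiM B (\<lambda>_. lborel)))"
    unfolding leb by (rule emeasure_distr[OF \<phi>m])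
  also have "\<phi> -` (-E) \<inter> space (PiM B (\<lambda>_. lborel)) = {}" using \<phi>E by auto
  finally show ?thesis by simp
qed

lemma usc_measurable:
  fixes f :: "'a::euclidean_space \<Rightarrow> real"
  assumes usc: "usc_on X f" and cl: "closed X"
  shows "(\<lambda>x. f x * indicator X x) \<in> borel_measurable borel"
  unfolding borel_measurable_iff_less
proof
  fix a :: real
  define U where "U = \<Union>{ball x d | x d. x \<in> X \<and> d > 0 \<and> (\<forall>y\<in>X. dist y x < d \<longrightarrow> f y < a)}"
  have oU: "open U" unfolding U_def by auto
  have XU: "X \<inter> {x. f x < a} = X \<inter> U"
  proof
    show "X \<inter> {x. f x < a} \<subseteq> X \<inter> U"
    proof
      fix x assume x: "x \<in> X \<inter> {x. f x < a}"
      have "x \<in> X" "a - f x > 0" using x by auto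
      then obtain d where d: "d > 0" "\<forall>y\<in>X. dist y x < d \<longrightarrow> f y < f x + (a - f x)"
        using usc unfolding usc_on_def by blast
      then have "x \<in> ball x d" "ball x d \<subseteq> U" using x unfolding U_def by auto
      then show "x \<in> X \<inter> U" using x by auto
    qed
    show "X \<inter> U \<subseteq> X \<inter> {x. f x < a}"
      unfolding U_def by (auto simp: dist_commute)
  qed
  have "{w \<in> space borel. f w * indicator X w < a} = (X \<inter> U) \<union> (-X \<inter> {w. 0 < a})"
    using XU by (auto simp: indicator_def)
  also have "\<dots> \<in> sets borel" using cl oU by (intro sets.Un sets.Int) (auto simp: borel_closed borel_open)
  finally show "{w \<in> space borel. f w * indicator X w < a} \<in> sets borel" .
qed

lemma usc_bounded:
  fixes f :: "'a::euclidean_space \<Rightarrow> real"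
  assumes usc: "usc_on X f" and X: "compact X"
  shows "\<exists>M. \<forall>x\<in>X. f x \<le> M"
proof -
  have "\<forall>x\<in>X. \<exists>d>0. \<forall>y\<in>X. dist y x < d \<longrightarrow> f y < f x + 1"
    using usc unfolding usc_on_def by simp
  from bchoice[OF this] obtain d where d: "\<forall>x\<in>X. d x > 0 \<and> (\<forall>y\<in>X. dist y x < d x \<longrightarrow> f y < f x + 1)"
    by blast
  obtain C where C: "C \<subseteq> X" "finite C" "X \<subseteq> (\<Union>c\<in>C. ball c (d c))"
  proof (rule compactE_image[OF X, of X "\<lambda>c. ball c (d c)"])
    show "X \<subseteq> (\<Union>c\<in>X. ball c (d c))" using d by force
  qed auto
  define M where "M = Max (insert 0 ((\<lambda>c. f c + 1) ` C))"
  have "f y \<le> M" if y: "y \<in> X" for y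
  proof -
    obtain c where c: "c \<in> C" "y \<in> ball c (d c)" using C y by auto
    then have "f y < f c + 1" using d C y by (auto simp: dist_commute)
    also have "f c + 1 \<le> M" unfolding M_def using C c by (intro Max_ge) auto
    finally show ?thesis by simp
  qed
  then show ?thesis by blast
qed

lemma msupport_nonempty:
  fixes \<pi> :: "'a::euclidean_space measure"
  assumes prob: "prob_space \<pi>" and sets: "sets \<pi> = sets borel" and X: "compact X"
    and nX: "emeasure \<pi> (-X) = 0"
  shows "msupport \<pi> \<noteq> {}"
proof
  assume emp: "msupport \<pi> = {}"
  have "\<forall>x. \<exists>e>0. emeasure \<pi> (ball x e) = 0"
    using emp unfolding msupport_def by (auto simp: not_less)
  from choice[OF this] obtain e where e: "\<forall>x. e x > 0 \<and> emeasure \<pi> (ball x (e x)) = 0" by blast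
  obtain C where C: "C \<subseteq> X" "finite C" "X \<subseteq> (\<Union>c\<in>C. ball c (e c))"
  proof (rule compactE_image[OF X, of X "\<lambda>c. ball c (e c)"])
    show "X \<subseteq> (\<Union>c\<in>X. ball c (e c))" using e by force
  qed auto
  have bn: "ball c (e c) \<in> null_sets \<pi>" for c
  proof -
    have "ball c (e c) \<in> sets \<pi>" using sets by simp
    then show ?thesis using e by (simp add: null_sets_def)
  qed
  have U: "(\<Union>c\<in>C. ball c (e c)) \<in> null_sets \<pi>"
    by (rule null_sets_UN'[OF countable_finite[OF C(2)] bn])
  have Xs: "X \<in> sets \<pi>" using sets X by (simp add: borel_closed compact_imp_closed)
  have "X \<in> null_sets \<pi>" by (rule null_sets_subset[OF U Xs C(3)])
  moreover have "-X \<in> sets \<pi>" using sets X by (simp add: borel_closed compact_imp_closed borel_open open_Compl)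
  then have "-X \<in> null_sets \<pi>" using nX by (simp add: null_sets_def)
  ultimately have "X \<union> -X \<in> null_sets \<pi>" by (rule null_sets.Un)
  then have "emeasure \<pi> (space \<pi>) = 0" using sets_eq_imp_space_eq[OF sets] by (simp add: null_sets_def)
  then show False using prob by (simp add: prob_space.emeasure_space_1)
qed

lemma support_distinguishes:
  fixes \<pi> :: "'a::euclidean_space measure" and w1 w2 :: "'a \<Rightarrow> real"
  assumes sets: "sets \<pi> = sets borel" and fin: "emeasure \<pi> (space \<pi>) < \<infinity>"
    and p: "p \<in> msupport \<pi>"
    and c1: "isCont w1 p" and c2: "isCont w2 p"
    and w1m: "w1 \<in> borel_measurable borel" and w2m: "w2 \<in> borel_measurable borel"
    and w0: "0 \<le> w1 p" and lt: "w1 p < w2 p"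
  shows "density \<pi> (\<lambda>x. ennreal (w1 x)) \<noteq> density \<pi> (\<lambda>x. ennreal (w2 x))"
proof
  assume eqd: "density \<pi> (\<lambda>x. ennreal (w1 x)) = density \<pi> (\<lambda>x. ennreal (w2 x))"
  define q where "q = (w2 p - w1 p) / 3"
  have q: "q > 0" using lt unfolding q_def by simp
  obtain e1 where e1: "e1 > 0" "\<forall>y. dist y p < e1 \<longrightarrow> dist (w1 y) (w1 p) < q"
    using c1 q unfolding continuous_at_eps_delta by blast
  obtain e2 where e2: "e2 > 0" "\<forall>y. dist y p < e2 \<longrightarrow> dist (w2 y) (w2 p) < q"
    using c2 q unfolding continuous_at_eps_delta by blast
  define e where "e = min e1 e2"
  define B where "B = ball p e"
  have e: "e > 0" using e1 e2 unfolding e_def by simp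
  define m1 where "m1 = w1 p + q"
  define m2 where "m2 = w2 p - q"
  have m: "0 \<le> m1" "m1 < m2" using w0 q lt unfolding m1_def m2_def q_def by (auto simp: field_simps)
  have b1: "w1 y \<le> m1" if "y \<in> B" for y
  proof -
    have "dist y p < e1" using that unfolding B_def e_def by (simp add: dist_commute)
    then have "dist (w1 y) (w1 p) < q" using e1 by blast
    then show ?thesis unfolding m1_def dist_real_def by linarith
  qed
  have b2: "m2 \<le> w2 y" if "y \<in> B" for y
  proof -
    have "dist y p < e2" using that unfolding B_def e_def by (simp add: dist_commute)
    then have "dist (w2 y) (w2 p) < q" using e2 by blast
    then show ?thesis unfolding m2_def dist_real_def by linarith
  qed
  have Bs: "B \<in> sets \<pi>" using sets unfolding B_def by simp
  have P0: "emeasure \<pi> B > 0" using p e unfolding msupport_def B_def by auto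
  have Pfin: "emeasure \<pi> B < \<infinity>"
    using fin emeasure_space[of \<pi> B] by (meson le_less_trans)
  obtain P where P: "emeasure \<pi> B = ennreal P" "P > 0"
    using P0 Pfin by (metis ennreal_cases ennreal_less_zero_iff infinity_ennreal_def less_irrefl)
  have w1me: "(\<lambda>x. ennreal (w1 x)) \<in> borel_measurable \<pi>"
    unfolding measurable_cong_sets[OF sets refl] using w1m by measurable
  have w2me: "(\<lambda>x. ennreal (w2 x)) \<in> borel_measurable \<pi>"
    unfolding measurable_cong_sets[OF sets refl] using w2m by measurable
  have "emeasure (density \<pi> (\<lambda>x. ennreal (w1 x))) B = (\<integral>\<^sup>+ x. ennreal (w1 x) * indicator B x \<partial>\<pi>)"
    by (rule emeasure_density[OF w1me Bs])
  also have "\<dots> \<le> (\<integral>\<^sup>+ x. ennreal m1 * indicator B x \<partial>\<pi>)"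
    using b1 by (intro nn_integral_mono) (auto simp: indicator_def intro: ennreal_leI)
  also have "\<dots> = ennreal m1 * emeasure \<pi> B" using Bs by (simp add: nn_integral_cmult_indicator)
  also have "\<dots> = ennreal (m1 * P)" using P m by (simp add: ennreal_mult)
  also have "\<dots> < ennreal (m2 * P)" using P m by (simp add: ennreal_less_iff mult_strict_right_mono)
  also have "\<dots> = ennreal m2 * emeasure \<pi> B" using P m by (simp add: ennreal_mult)
  also have "\<dots> = (\<integral>\<^sup>+ x. ennreal m2 * indicator B x \<partial>\<pi>)" using Bs by (simp add: nn_integral_cmult_indicator)
  also have "\<dots> \<le> (\<integral>\<^sup>+ x. ennreal (w2 x) * indicator B x \<partial>\<pi>)"
    using b2 by (intro nn_integral_mono) (auto simp: indicator_def intro: ennreal_leI)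
  also have "\<dots> = emeasure (density \<pi> (\<lambda>x. ennreal (w2 x))) B"
    by (rule emeasure_density[OF w2me Bs, symmetric])
  finally show False using eqd by simp
qed

lemma line_in_segment:
  fixes X :: "'a::euclidean_space set"
  assumes X: "compact X" and cv: "convex X" and z0: "z0 \<in> X"
  shows "\<exists>a b. closed_segment a b \<subseteq> X \<and> (\<forall>s. z0 + s *\<^sub>R w \<in> X \<longrightarrow> z0 + s *\<^sub>R w \<in> closed_segment a b)"
proof (cases "w = 0")
  case True
  then show ?thesis using z0 by (intro exI[of _ z0]) auto
next
  case False
  define T where "T = {s. z0 + s *\<^sub>R w \<in> X}"
  have clT: "closed T" unfolding T_def
    using continuous_closed_vimage[OF compact_imp_closed[OF X], of "\<lambda>s::real. z0 + s *\<^sub>R w"]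
    by (simp add: vimage_def continuous_intros)
  obtain R where R: "\<forall>x\<in>X. norm x \<le> R" using compact_imp_bounded[OF X] bounded_iff by blast
  have bT: "\<bar>s\<bar> \<le> (R + norm z0) / norm w" if "s \<in> T" for s
  proof -
    have "\<bar>s\<bar> * norm w = norm (s *\<^sub>R w)" by simp
    also have "\<dots> = norm ((z0 + s *\<^sub>R w) - z0)" by simp
    also have "\<dots> \<le> norm (z0 + s *\<^sub>R w) + norm z0" by (rule norm_triangle_ineq4)
    also have "\<dots> \<le> R + norm z0" using R that unfolding T_def by auto
    finally show ?thesis using False by (simp add: field_simps)
  qed
  have T0: "0 \<in> T" using z0 unfolding T_def by simp
  have bb: "bdd_below T" "bdd_above T" using bT unfolding bdd_below_def bdd_above_def
    by (meson abs_le_D1 abs_le_D2 minus_le_iff)+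
  define s0 where "s0 = Inf T"
  define s1 where "s1 = Sup T"
  have s0T: "s0 \<in> T" unfolding s0_def using clT T0 bb by (intro closed_contains_Inf) auto
  have s1T: "s1 \<in> T" unfolding s1_def using clT T0 bb by (intro closed_contains_Sup) auto
  define a where "a = z0 + s0 *\<^sub>R w"
  define b where "b = z0 + s1 *\<^sub>R w"
  have ab: "a \<in> X" "b \<in> X" using s0T s1T unfolding T_def a_def b_def by auto
  have seg: "closed_segment a b \<subseteq> X" by (rule closed_segment_subset[OF ab cv])
  have "z0 + s *\<^sub>R w \<in> closed_segment a b" if "s \<in> T" for s
  proof -
    have le: "s0 \<le> s" "s \<le> s1" unfolding s0_def s1_def using that bb by (auto intro: cInf_lower cSup_upper)
    show ?thesis
    proof (cases "s1 = s0")
      case True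
      then have "s = s0" using le by simp
      then show ?thesis unfolding a_def by simp
    next
      case False
      then have d: "s1 - s0 > 0" using le by simp
      define u where "u = (s - s0) / (s1 - s0)"
      have u: "0 \<le> u" "u \<le> 1" unfolding u_def using le d by (auto simp: field_simps)
      have uu: "u * (s1 - s0) = s - s0" unfolding u_def using d by simp
      have "(1 - u) * s0 + u * s1 = s0 + u * (s1 - s0)" by (simp add: algebra_simps)
      then have "(1 - u) * s0 + u * s1 = s" using uu by simp
      then have "(1 - u) *\<^sub>R a + u *\<^sub>R b = z0 + s *\<^sub>R w"
        unfolding a_def b_def by (simp add: algebra_simps flip: scaleR_add_left)
      then show ?thesis unfolding closed_segment_def using u by (auto intro!: exI[of _ u])
    qed
  qed
  then show ?thesis using seg unfolding T_def by blast
qed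

lemma single_conv:
  assumes "q \<in> S" "sets q = sets borel"
  shows "q \<in> conv_meas S"
  unfolding conv_meas_def
proof (intro CollectI conjI exI[of _ "1::nat"] exI[of _ "\<lambda>_. 1::real"] exI[of _ "\<lambda>_. q"])
  show "sets q = sets borel" by (rule assms(2))
qed (use assms in auto)

theorem lemma3p2:
  fixes X :: "'a::euclidean_space set" and N :: "'a \<Rightarrow> real" and \<mu> :: real
    and \<beta> :: "'a \<Rightarrow> real" and f :: "'a \<Rightarrow> real" and \<pi> :: "'a measure"
  assumes "compact X" and "convex X" and "is_norm N" and "\<mu> > 0"
    and "continuous_on X \<beta>" and "\<forall>x\<in>X. \<beta> x > 0"
    and "usc_on X f"
    and "extreme_meas (conv_meas (S_set X N \<mu> \<beta> f)) \<pi>"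
  shows "(\<exists>x\<in>X. \<pi> = return borel x \<and> f x \<ge> 0)
       \<or> (\<exists>a b. closed_segment a b \<subseteq> X \<and> emeasure \<pi> (- closed_segment a b) = 0)"
proof -
  note X = assms(1) and cvX = assms(2) and \<beta>c = assms(5) and \<beta>pos = assms(6) and usc = assms(7)
  define S where "S = S_set X N \<mu> \<beta> f"
  have ext: "extreme_meas (conv_meas S) \<pi>" using assms(8) unfolding S_def .
  have SS: "\<forall>q\<in>S. sets q = sets borel" unfolding S_def S_set_def by auto
  have piS: "\<pi> \<in> S" by (rule extreme_in_S[OF ext SS])
  have prob: "prob_space \<pi>" and sets: "sets \<pi> = sets borel" and nX: "emeasure \<pi> (-X) = 0"
    and slc1: "strongly_logconcave \<mu> N \<pi>"
    and cond: "(\<integral>\<^sup>+ x. ennreal (- (f x * indicator X x)) \<partial>\<pi>) \<le> (\<integral>\<^sup>+ x. ennreal (f x * indicator X x) \<partial>\<pi>)"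
    using piS unfolding S_def S_set_def by auto
  have space: "space \<pi> = UNIV" using sets_eq_imp_space_eq[OF sets] by simp
  have clX: "closed X" using X by (rule compact_imp_closed)
  have Xb[measurable]: "X \<in> sets borel" using clX by (rule borel_closed)
  have nXb: "-X \<in> sets \<pi>" using Xb sets by auto
  have aeX: "AE x in \<pi>. x \<in> X" by (rule AE_I[where N="-X"]) (use nX nXb in auto)
  define K where "K = msupport \<pi>"
  have Kne: "K \<noteq> {}" unfolding K_def by (rule msupport_nonempty[OF prob sets X nX])
  have KX: "K \<subseteq> X" unfolding K_def by (rule msupport_subset[OF sets clX nX])
  have Xne: "X \<noteq> {}" using Kne KX by auto
  have sp1: "emeasure \<pi> (space \<pi>) = 1" using prob by (simp add: prob_space.emeasure_space_1)
  have msp1: "measure \<pi> (space \<pi>) = 1" using prob by (simp add: prob_space.prob_space)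
  have finsp: "emeasure \<pi> (space \<pi>) < \<infinity>" using sp1 by simp
  have finX: "emeasure \<pi> X < \<infinity>"
  proof -
    have "emeasure \<pi> X \<le> emeasure \<pi> (space \<pi>)" using Xb sets by (intro emeasure_mono) (auto simp: space)
    then show ?thesis using sp1 by (simp add: le_less_trans)
  qed
  note intX = integrable_on_X[OF sets finX Xb aeX]
  have intc: "integrable \<pi> (\<lambda>x. k)" for k :: real
    using prob by (simp add: prob_space.finite_measure finite_measure.integrable_const)
  have measE: "h \<in> borel_measurable \<pi>" if "h \<in> borel_measurable borel" for h :: "'a \<Rightarrow> 'z::topological_space"
    unfolding measurable_cong_sets[OF sets refl] using that .
  obtain M where fM: "\<forall>x\<in>X. f x \<le> M" using usc_bounded[OF usc X] by blast
  have Fm: "(\<lambda>x. f x * indicator X x) \<in> borel_measurable borel" by (rule usc_measurable[OF usc clX])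
  obtain xm where xm: "xm \<in> X" "\<forall>y\<in>X. \<beta> xm \<le> \<beta> y" using continuous_attains_inf[OF X Xne \<beta>c] by blast
  obtain xM where xM: "xM \<in> X" "\<forall>y\<in>X. \<beta> y \<le> \<beta> xM" using continuous_attains_sup[OF X Xne \<beta>c] by blast
  have b0: "\<beta> xm > 0" using xm \<beta>pos by auto
  obtain R where R: "R > 0" "\<forall>x\<in>X. norm x \<le> R" using compact_imp_bounded[OF X] bounded_pos by blast
  define F where "F x = f x * indicator X x" for x
  have Fm'[measurable]: "F \<in> borel_measurable borel" unfolding F_def using Fm .
  have Fb: "F x \<le> max M 0" for x using fM unfolding F_def by (auto simp: indicator_def)
  have intF: "integrable \<pi> F" and IF: "0 \<le> integral\<^sup>L \<pi> F"
    using integral_of_cond[OF measE[OF Fm'] finsp Fb] cond unfolding F_def by auto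
  have intFx: "integrable \<pi> (\<lambda>x. F x *\<^sub>R x)"
  proof -
    have i1: "integrable \<pi> (\<lambda>x. R * F x)" using intF by simp
    have m: "(\<lambda>x. F x *\<^sub>R x) \<in> borel_measurable \<pi>" by (rule measE) measurable
    have "AE x in \<pi>. norm (F x *\<^sub>R x) \<le> norm (R * F x)"
      using aeX
    proof eventually_elim
      case (elim x)
      have "norm (F x *\<^sub>R x) = \<bar>F x\<bar> * norm x" by simp
      also have "\<dots> \<le> \<bar>F x\<bar> * R" using R elim by (intro mult_left_mono) auto
      also have "\<dots> = norm (R * F x)" using R by (simp add: abs_mult)
      finally show ?case .
    qed
    from Bochner_Integration.integrable_bound[OF i1 m this] show ?thesis .
  qed
  define wv where "wv = (\<integral>x. F x *\<^sub>R x \<partial>\<pi>)"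
  define uf where "uf d = d - ((d \<bullet> wv) / (wv \<bullet> wv)) *\<^sub>R wv" for d
  have uf_orth: "uf d \<bullet> wv = 0" for d
    by (cases "wv = 0") (auto simp: uf_def inner_diff_left)
  have uf_self: "uf d \<bullet> d = uf d \<bullet> uf d" for d
  proof -
    have "d = uf d + ((d \<bullet> wv) / (wv \<bullet> wv)) *\<^sub>R wv" unfolding uf_def by simp
    then have "uf d \<bullet> d = uf d \<bullet> (uf d + ((d \<bullet> wv) / (wv \<bullet> wv)) *\<^sub>R wv)" by simp
    also have "\<dots> = uf d \<bullet> uf d" using uf_orth[of d] by (simp add: inner_add_right)
    finally show ?thesis .
  qed
  show ?thesis
  proof (cases "\<exists>y\<in>K. \<exists>z\<in>K. uf (y - z) \<noteq> 0")
    case True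
    then obtain y z where y: "y \<in> K" and z: "z \<in> K" and u0: "uf (y - z) \<noteq> 0" by blast
    define u where "u = uf (y - z)"
    have uwv: "u \<bullet> wv = 0" unfolding u_def by (rule uf_orth)
    have ud: "u \<bullet> (y - z) > 0" unfolding u_def uf_self using u0 by simp
    define \<epsilon> where "\<epsilon> = 1 / (4 * (norm u * R + 1))"
    have nuR: "norm u * R \<ge> 0" using R by simp
    have \<epsilon>0: "\<epsilon> > 0" unfolding \<epsilon>_def using nuR by simp
    have small: "\<bar>\<epsilon> * (u \<bullet> x)\<bar> \<le> 1/4" if "x \<in> X" for x
    proof -
      have "\<bar>u \<bullet> x\<bar> \<le> norm u * norm x" by (rule Cauchy_Schwarz_ineq2)
      also have "\<dots> \<le> norm u * R" using R that by (intro mult_left_mono) auto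
      finally have "\<bar>u \<bullet> x\<bar> \<le> norm u * R + 1" by simp
      then have "\<epsilon> * \<bar>u \<bullet> x\<bar> \<le> \<epsilon> * (norm u * R + 1)" using \<epsilon>0 by (intro mult_left_mono) auto
      also have "\<dots> = 1/4" unfolding \<epsilon>_def using nuR by simp
      finally show ?thesis using \<epsilon>0 by (simp add: abs_mult)
    qed
    define v1 where "v1 = \<epsilon> *\<^sub>R u"
    define v2 where "v2 = - (\<epsilon> *\<^sub>R u)"
    have vb: "\<forall>x\<in>X. 1/4 \<le> 1/2 + v \<bullet> x \<and> 1/2 + v \<bullet> x \<le> 3/4" if "v = v1 \<or> v = v2" for v
    proof
      fix x assume x: "x \<in> X"
      have "\<bar>v \<bullet> x\<bar> \<le> 1/4" using small[OF x] that unfolding v1_def v2_def by auto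
      then show "1/4 \<le> 1/2 + v \<bullet> x \<and> 1/2 + v \<bullet> x \<le> 3/4" by linarith
    qed
    have vw: "v \<bullet> wv = 0" if "v = v1 \<or> v = v2" for v
      using that uwv unfolding v1_def v2_def by auto
    have fl: "0 \<le> (\<integral>x. (1/2 + v \<bullet> x) * (f x * indicator X x) \<partial>\<pi>)" if "v \<bullet> wv = 0" for v
    proof -
      have "(\<lambda>x. (1/2 + v \<bullet> x) * (f x * indicator X x)) = (\<lambda>x. 1/2 * F x + v \<bullet> (F x *\<^sub>R x))"
        unfolding F_def by (simp add: algebra_simps fun_eq_iff)
      moreover have "(\<integral>x. 1/2 * F x + v \<bullet> (F x *\<^sub>R x) \<partial>\<pi>) = 1/2 * integral\<^sup>L \<pi> F + v \<bullet> wv"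
      proof -
        have i1: "integrable \<pi> (\<lambda>x. 1/2 * F x)" using intF by simp
        have i2: "integrable \<pi> (\<lambda>x. v \<bullet> (F x *\<^sub>R x))" using intFx by (rule integrable_inner_right)
        have "(\<integral>x. 1/2 * F x + v \<bullet> (F x *\<^sub>R x) \<partial>\<pi>) = (\<integral>x. 1/2 * F x \<partial>\<pi>) + (\<integral>x. v \<bullet> (F x *\<^sub>R x) \<partial>\<pi>)"
          by (rule Bochner_Integration.integral_add[OF i1 i2])
        also have "(\<integral>x. v \<bullet> (F x *\<^sub>R x) \<partial>\<pi>) = v \<bullet> wv" unfolding wv_def using intFx by (rule integral_inner_right)
        also have "(\<integral>x. 1/2 * F x \<partial>\<pi>) = 1/2 * integral\<^sup>L \<pi> F" by (rule integral_mult_right_zero)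
        finally show ?thesis .
      qed
      ultimately show ?thesis using that IF by simp
    qed
    have b0X: "\<forall>x\<in>X. \<beta> xm \<le> \<beta> x" using xm by auto
    have B1X: "\<forall>x\<in>X. \<beta> x \<le> \<beta> xM" using xM by auto
    have q4: "(1/4::real) > 0" by simp
    define c1 where "c1 = (\<integral>x. 1/2 + v1 \<bullet> x \<partial>\<pi>)"
    define c2 where "c2 = (\<integral>x. 1/2 + v2 \<bullet> x \<partial>\<pi>)"
    define \<pi>1 where "\<pi>1 = density \<pi> (\<lambda>x. ennreal ((1 / c1) * (1/2 + v1 \<bullet> x)))"
    define \<pi>2 where "\<pi>2 = density \<pi> (\<lambda>x. ennreal ((1 / c2) * (1/2 + v2 \<bullet> x)))"
    have S1: "\<pi>1 \<in> S" unfolding \<pi>1_def c1_def S_def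
      by (rule weight_in_S[OF piS[unfolded S_def] X Fm fM \<beta>c b0 b0X B1X q4 vb fl]) (auto intro: vw)
    have S2: "\<pi>2 \<in> S" unfolding \<pi>2_def c2_def S_def
      by (rule weight_in_S[OF piS[unfolded S_def] X Fm fM \<beta>c b0 b0X B1X q4 vb fl]) (auto intro: vw)
    define l1 where "l1 x = 1/2 + v1 \<bullet> x" for x
    define l2 where "l2 x = 1/2 + v2 \<bullet> x" for x
    have l1b: "\<forall>x\<in>X. 1/4 \<le> l1 x \<and> l1 x \<le> 3/4" using vb[of v1] unfolding l1_def by auto
    have l2b: "\<forall>x\<in>X. 1/4 \<le> l2 x \<and> l2 x \<le> 3/4" using vb[of v2] unfolding l2_def by auto
    have l12: "l1 x + l2 x = 1" for x unfolding l1_def l2_def v1_def v2_def by (simp add: inner_minus_left)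
    have l1m[measurable]: "l1 \<in> borel_measurable borel" unfolding l1_def by measurable
    have l2m[measurable]: "l2 \<in> borel_measurable borel" unfolding l2_def by measurable
    have il1: "integrable \<pi> l1" using l1b by (intro intX[where B="3/4"] l1m) auto
    have il2: "integrable \<pi> l2" using l2b by (intro intX[where B="3/4"] l2m) auto
    have c1l: "1/4 \<le> c1"
    proof -
      have "(\<integral>x. 1/4 \<partial>\<pi>) \<le> (\<integral>x. l1 x \<partial>\<pi>)"
        using il1 aeX l1b intc by (intro integral_mono_AE) (auto elim!: eventually_mono)
      then show ?thesis using msp1 unfolding c1_def l1_def by simp
    qed
    have c2l: "1/4 \<le> c2"
    proof -
      have "(\<integral>x. 1/4 \<partial>\<pi>) \<le> (\<integral>x. l2 x \<partial>\<pi>)"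
        using il2 aeX l2b intc by (intro integral_mono_AE) (auto elim!: eventually_mono)
      then show ?thesis using msp1 unfolding c2_def l2_def by simp
    qed
    have c12: "c1 + c2 = 1"
    proof -
      have "c1 + c2 = (\<integral>x. l1 x + l2 x \<partial>\<pi>)" unfolding c1_def c2_def l1_def[symmetric] l2_def[symmetric]
        using il1 il2 by (simp add: Bochner_Integration.integral_add)
      also have "\<dots> = 1" unfolding l12 using msp1 by simp
      finally show ?thesis .
    qed
    have c10: "0 < c1" "c1 < 1" using c1l c2l c12 by auto
    have c20: "c2 > 0" using c2l by simp
    have part: "ennreal c * emeasure (density \<pi> (\<lambda>x. ennreal ((1 / c) * l x))) A
        = (\<integral>\<^sup>+ x. ennreal (l x) * indicator A x \<partial>\<pi>)"
      if A: "A \<in> sets borel" and c: "c > 0" and lm: "l \<in> borel_measurable borel"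
        and lb: "\<forall>x\<in>X. 0 \<le> l x" for c and l :: "'a \<Rightarrow> real" and A
    proof -
      have m1: "(\<lambda>x. ennreal ((1 / c) * l x)) \<in> borel_measurable \<pi>" by (rule measE) (use lm in measurable)
      have m2: "(\<lambda>x. ennreal ((1 / c) * l x) * indicator A x) \<in> borel_measurable \<pi>"
        by (rule measE) (use lm A in measurable)
      have "ennreal c * emeasure (density \<pi> (\<lambda>x. ennreal ((1 / c) * l x))) A
          = ennreal c * (\<integral>\<^sup>+ x. ennreal ((1 / c) * l x) * indicator A x \<partial>\<pi>)"
        using A sets by (subst emeasure_density[OF m1]) auto
      also have "\<dots> = (\<integral>\<^sup>+ x. ennreal c * (ennreal ((1 / c) * l x) * indicator A x) \<partial>\<pi>)"
        by (rule nn_integral_cmult[OF m2, symmetric])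
      also have "\<dots> = (\<integral>\<^sup>+ x. ennreal (l x) * indicator A x \<partial>\<pi>)"
        using aeX
      proof (intro nn_integral_cong_AE, eventually_elim)
        case (elim x)
        then have "0 \<le> l x" using lb by auto
        then have "ennreal c * ennreal ((1 / c) * l x) = ennreal (l x)"
          using c by (simp add: ennreal_mult[symmetric])
        then show ?case by (simp add: mult.assoc[symmetric])
      qed
      finally show ?thesis .
    qed
    have dec: "\<forall>A\<in>sets borel. emeasure \<pi> A = ennreal c1 * emeasure \<pi>1 A + ennreal (1 - c1) * emeasure \<pi>2 A"
    proof
      fix A :: "'a set" assume A: "A \<in> sets borel"
      have e1: "ennreal c1 * emeasure \<pi>1 A = (\<integral>\<^sup>+ x. ennreal (l1 x) * indicator A x \<partial>\<pi>)"
        unfolding \<pi>1_def l1_def[symmetric] using A c10 l1b by (intro part) auto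
      have e2: "ennreal (1 - c1) * emeasure \<pi>2 A = (\<integral>\<^sup>+ x. ennreal (l2 x) * indicator A x \<partial>\<pi>)"
      proof -
        have "1 - c1 = c2" using c12 by simp
        then show ?thesis unfolding \<pi>2_def l2_def[symmetric] using A c20 l2b by (simp only:) (intro part, auto)
      qed
      have "ennreal c1 * emeasure \<pi>1 A + ennreal (1 - c1) * emeasure \<pi>2 A
          = (\<integral>\<^sup>+ x. ennreal (l1 x) * indicator A x + ennreal (l2 x) * indicator A x \<partial>\<pi>)"
        unfolding e1 e2 by (rule nn_integral_add[symmetric]) (use A in \<open>auto intro!: measE\<close>)
      also have "\<dots> = (\<integral>\<^sup>+ x. indicator A x \<partial>\<pi>)"
        using aeX
      proof (intro nn_integral_cong_AE, eventually_elim)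
        case (elim x)
        then have "0 \<le> l1 x" "0 \<le> l2 x" using l1b l2b by auto
        then have "ennreal (l1 x) + ennreal (l2 x) = 1" using l12[of x] by (simp flip: ennreal_plus)
        then show ?case by (simp add: distrib_right[symmetric])
      qed
      also have "\<dots> = emeasure \<pi> A" using A sets by simp
      finally show "emeasure \<pi> A = ennreal c1 * emeasure \<pi>1 A + ennreal (1 - c1) * emeasure \<pi>2 A" by simp
    qed
    have C1: "\<pi>1 \<in> conv_meas S" using S1 SS by (intro single_conv) auto
    have C2: "\<pi>2 \<in> conv_meas S" using S2 SS by (intro single_conv) auto
    have eq12: "\<pi>1 = \<pi>2" using ext C1 C2 dec c10 unfolding extreme_meas_def by blast
    define w1 where "w1 x = (1 / c1) * l1 x" for x
    define w2 where "w2 x = (1 / c2) * l2 x" for x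
    have dif: "w1 y - w2 y \<noteq> w1 z - w2 z"
    proof
      assume "w1 y - w2 y = w1 z - w2 z"
      then have "(1 / c1) * (l1 y - l1 z) + (1 / c2) * (l2 z - l2 y) = 0"
        unfolding w1_def w2_def by (simp add: algebra_simps)
      moreover have "l1 y - l1 z = \<epsilon> * (u \<bullet> (y - z))" unfolding l1_def v1_def by (simp add: inner_diff_right right_diff_distrib)
      moreover have "l2 z - l2 y = \<epsilon> * (u \<bullet> (y - z))" unfolding l2_def v2_def by (simp add: inner_diff_right right_diff_distrib)
      ultimately have "(1 / c1 + 1 / c2) * (\<epsilon> * (u \<bullet> (y - z))) = 0" by (simp add: algebra_simps)
      moreover have "1 / c1 + 1 / c2 > 0" using c10 c20 by (simp add: add_pos_pos)
      moreover have "\<epsilon> * (u \<bullet> (y - z)) > 0" using \<epsilon>0 ud by simp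
      ultimately show False by (metis less_irrefl mult_eq_0_iff)
    qed
    then obtain p where p: "p \<in> K" "w1 p \<noteq> w2 p" using y z by (cases "w1 y = w2 y") auto
    have pX: "p \<in> X" using p KX by auto
    have w1p: "0 \<le> w1 p" using l1b pX c10 unfolding w1_def by auto
    have w2p: "0 \<le> w2 p" using l2b pX c20 unfolding w2_def by auto
    have cw1: "isCont w1 p" unfolding w1_def l1_def by (intro continuous_intros)
    have cw2: "isCont w2 p" unfolding w2_def l2_def by (intro continuous_intros)
    have w1m: "w1 \<in> borel_measurable borel" unfolding w1_def by measurable
    have w2m: "w2 \<in> borel_measurable borel" unfolding w2_def by measurable
    have d1: "\<pi>1 = density \<pi> (\<lambda>x. ennreal (w1 x))" unfolding \<pi>1_def w1_def l1_def ..
    have d2: "\<pi>2 = density \<pi> (\<lambda>x. ennreal (w2 x))" unfolding \<pi>2_def w2_def l2_def ..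
    show ?thesis
    proof (cases "w1 p < w2 p")
      case True
      from support_distinguishes[OF sets finsp p(1)[unfolded K_def] cw1 cw2 w1m w2m w1p True]
      show ?thesis using eq12 d1 d2 by simp
    next
      case False
      then have "w2 p < w1 p" using p by simp
      from support_distinguishes[OF sets finsp p(1)[unfolded K_def] cw2 cw1 w2m w1m w2p this]
      show ?thesis using eq12 d1 d2 by simp
    qed
  next
    case False
    obtain z0 where z0: "z0 \<in> K" using Kne by blast
    define Lin where "Lin = range (\<lambda>s. z0 + s *\<^sub>R wv)"
    have KL: "K \<subseteq> Lin"
    proof
      fix y assume y: "y \<in> K"
      then have "uf (y - z0) = 0" using False z0 by blast
      then have "y - z0 = ((y - z0) \<bullet> wv / (wv \<bullet> wv)) *\<^sub>R wv" unfolding uf_def by simp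
      then have "y = z0 + ((y - z0) \<bullet> wv / (wv \<bullet> wv)) *\<^sub>R wv" by (metis add.commute diff_add_cancel)
      then show "y \<in> Lin" unfolding Lin_def by blast
    qed
    have affL: "affine Lin" unfolding affine_def Lin_def
    proof (clarify)
      fix s1 s2 u v :: real assume uv: "u + v = 1"
      have "u *\<^sub>R (z0 + s1 *\<^sub>R wv) + v *\<^sub>R (z0 + s2 *\<^sub>R wv) = (u + v) *\<^sub>R z0 + (u * s1 + v * s2) *\<^sub>R wv"
        by (simp add: algebra_simps)
      then show "u *\<^sub>R (z0 + s1 *\<^sub>R wv) + v *\<^sub>R (z0 + s2 *\<^sub>R wv) \<in> range (\<lambda>s. z0 + s *\<^sub>R wv)"
        using uv by auto
    qed
    define E where "E = affine hull K"
    have EL: "E \<subseteq> Lin" unfolding E_def using KL affL by (rule hull_minimal)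
    obtain g :: "'a \<Rightarrow> real" where gm: "g \<in> borel_measurable borel"
      and nu: "\<pi> = density (lebesgue_on_affine E) (\<lambda>x. ennreal (g x))"
      using slc1 unfolding strongly_logconcave_def Let_def E_def K_def by blast
    have Ene: "E \<noteq> {}" using Kne unfolding E_def by simp
    have clE: "closed E" unfolding E_def by simp
    have nEb: "-E \<in> sets borel" using clE by (simp add: borel_open open_Compl)
    have nullE: "-E \<in> null_sets (lebesgue_on_affine E)"
      using lebesgue_on_affine_null[OF _ Ene clE] nEb unfolding E_def by (auto simp: null_sets_def)
    have piE: "emeasure \<pi> (-E) = 0"
    proof -
      have "emeasure \<pi> (-E) = (\<integral>\<^sup>+ x. ennreal (g x) * indicator (-E) x \<partial>lebesgue_on_affine E)"
        unfolding nu
      proof (rule emeasure_density)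
        show "(\<lambda>x. ennreal (g x)) \<in> borel_measurable (lebesgue_on_affine E)"
          unfolding measurable_cong_sets[OF sets_lebesgue_on_affine refl] using gm by measurable
      qed (use nEb in auto)
      also have "\<dots> = 0" by (rule nn_integral_null_set[OF nullE])
      finally show ?thesis .
    qed
    obtain a b where ab: "closed_segment a b \<subseteq> X"
      and lin: "\<forall>s. z0 + s *\<^sub>R wv \<in> X \<longrightarrow> z0 + s *\<^sub>R wv \<in> closed_segment a b"
      using line_in_segment[OF X cvX, of z0 wv] z0 KX by blast
    have sub: "- closed_segment a b \<subseteq> -E \<union> -X"
    proof
      fix x assume x: "x \<in> - closed_segment a b"
      show "x \<in> -E \<union> -X"
      proof (rule ccontr)
        assume "x \<notin> -E \<union> -X"
        then have "x \<in> E" "x \<in> X" by auto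
        then obtain s where "x = z0 + s *\<^sub>R wv" using EL unfolding Lin_def by auto
        then show False using lin x \<open>x \<in> X\<close> by auto
      qed
    qed
    have segb: "- closed_segment a b \<in> sets \<pi>" using sets
      by (simp add: borel_open open_Compl compact_imp_closed)
    have "emeasure \<pi> (- closed_segment a b) \<le> emeasure \<pi> (-E \<union> -X)"
      using sub nXb nEb sets by (intro emeasure_mono) auto
    also have "\<dots> \<le> emeasure \<pi> (-E) + emeasure \<pi> (-X)"
      using nXb nEb sets by (intro emeasure_subadditive) auto
    also have "\<dots> = 0" using piE nX by simp
    finally have "emeasure \<pi> (- closed_segment a b) = 0" by simp
    then show ?thesis using ab by blast
  qed
qed

end
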